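(* Consider the pLSI topic model and asymptotic framework described in the context, and let $\mathcal{S}_K^*$ be the population simplex with vertices $v_1^*,\dots,v_K^*$. There exist constants $C_1,C_2>1$, not depending on $n,p,N$, such that, as $n,p,N\to\infty$ (i.e. for all sufficiently large $n,p,N$), $C_1^{-1}\le\|v_k^*-v_\ell^*\|\le C_1$ for all $1\le k\ne\ell\le K$, and $C_2^{-1}\le\mathrm{vol}(\mathcal{S}_K^* )\le C_2$, where $\mathrm{vol}$ is the $(K-1)$-dimensional volume.
   Context: Model. $K\ge2$ is fixed. $A=[A_1,\dots,A_K]\in\mathbb{R}^{p\times K}$ has nonnegative entries, each column summing to $1$; its rows $a_j^T$ are all nonzero. $W=[W_1,\dots,W_n]\in\mathbb{R}^{K\times n}$ is non-random with nonnegative entries, each column summing to $1$. $D_0=AW=[d_1^0,\dots,d_n^0]$. Each document has $N$ words and $D=D_0+Z$, where $Z=[Z_1,\dots,Z_n]$ has independent columns with $Z_i=N^{-1}(X_i-E[X_i])$, $X_i\sim\mathrm{Multinomial}(N,d_i^0)$. Identifiability: for each topic $k$ there is at least one anchor word $j$ (i.e. $A(j,k)\neq0$ and $A(j,\ell)=0$ for $\ell\neq k$) and at least one pure document $i$ (i.e. $W_i=e_k$, the $k$-th standard basis vector). Asymptotic framework: $n,p,N\to\infty$ with $K$ fixed; with $\Sigma_A=A^TA$ and $\Sigma_W=n^{-1}WW^T$, there is a fixed nonnegative, nonsingular, irreducible $K\times K$ matrix $\Sigma_0$ and a sequence $\beta_p>0$ with $\beta_p^{-1}\Sigma_A\to\Sigma_0$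 as $p\to\infty$; and there are constants $c_1,c_2>0$ with $\lambda_{\min}(\Sigma_W)\ge c_1$ and $\lambda_1(\tilde\Sigma_W)-\lambda_2(\tilde\Sigma_W)\ge c_2$, where $\tilde\Sigma_W=\Sigma_0^{1/2}\Sigma_W\Sigma_0^{1/2}$ and $\lambda_k(M)$ is the $k$-th largest eigenvalue of $M$. Population simplex. Let $\xi_1,\dots,\xi_K$ be the left singular vectors of $D_0$ for its $K$ largest singular values (in decreasing order), $\Xi=[\xi_1,\dots,\xi_K]$, and let $V=[V_1,\dots,V_K]\in\mathbb{R}^{K\times K}$ satisfy $\Xi=AV$; signs are taken so that $\xi_1$ and $V_1$ have positive entries (it is part of the setting that these ratios are well defined). Define $V^*\in\mathbb{R}^{K\times(K-1)}$ by $V^*(j,k)=V_{k+1}(j)/V_1(j)$; its rows $v_1^*,\dots,v_K^*\in\mathbb{R}^{K-1}$ are the vertices of the simplex $\mathcal{S}_K^*$. *)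

theory Defs
  imports "HOL-Analysis.Analysis" "HOL-Library.Option_ord"
begin

(* Topics are indexed by the finite type 'd option (K = CARD('d) + 1 >= 2);
   None is the first index. R^(K-1) is real^'d. *)

definition eigpair :: "real^'n^'n \<Rightarrow> real \<Rightarrow> real^'n \<Rightarrow> bool" where
  "eigpair M lam x \<longleftrightarrow> x \<noteq> 0 \<and> M *v x = lam *\<^sub>R x"

definition lambda_min_ge :: "real^'n^'n \<Rightarrow> real \<Rightarrow> bool" where
  "lambda_min_ge M c \<longleftrightarrow> (\<forall>lam x. eigpair M lam x \<longrightarrow> c \<le> lam)"

(* lambda_1(M) - lambda_2(M) >= c for a symmetric matrix M (eigenvalues counted with
   multiplicity): the top eigenvalue lam1 has an eigenvector u, and all eigenvalues on
   the orthogonal complement of u are at most lam1 - c *)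
definition eig_gap_ge :: "real^'n^'n \<Rightarrow> real \<Rightarrow> bool" where
  "eig_gap_ge M c \<longleftrightarrow> (\<exists>lam1 u. eigpair M lam1 u \<and>
      (\<forall>lam x. eigpair M lam x \<and> x \<bullet> u = 0 \<longrightarrow> lam \<le> lam1 - c))"

definition psd :: "real^'n^'n \<Rightarrow> bool" where
  "psd M \<longleftrightarrow> transpose M = M \<and> (\<forall>x. 0 \<le> x \<bullet> (M *v x))"

definition mat_sqrt :: "real^'n^'n \<Rightarrow> real^'n^'n" where
  "mat_sqrt M = (THE R. psd R \<and> R ** R = M)"

definition irreducible_mat :: "real^'n^'n \<Rightarrow> bool" where
  "irreducible_mat M \<longleftrightarrow> (\<forall>i j. (i, j) \<in> {(a, b). M $ a $ b \<noteq> 0}\<^sup>+)"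

(* A : p x K (rows j < p), W : K x n (columns i < n) *)
definition plsi_model ::
  "nat \<Rightarrow> nat \<Rightarrow> (nat \<Rightarrow> 'k::finite \<Rightarrow> real) \<Rightarrow> ('k \<Rightarrow> nat \<Rightarrow> real) \<Rightarrow> bool" where
  "plsi_model p n A W \<longleftrightarrow>
     (\<forall>j<p. \<forall>k. 0 \<le> A j k) \<and> (\<forall>k. (\<Sum>j<p. A j k) = 1) \<and>
     (\<forall>j<p. \<exists>k. A j k \<noteq> 0) \<and>
     (\<forall>i<n. \<forall>k. 0 \<le> W k i) \<and> (\<forall>i<n. (\<Sum>k\<in>UNIV. W k i) = 1) \<and>
     (\<forall>k. \<exists>j<p. A j k \<noteq> 0 \<and> (\<forall>l. l \<noteq> k \<longrightarrow> A j l = 0)) \<and>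
     (\<forall>k. \<exists>i<n. \<forall>l. W l i = (if l = k then 1 else 0))"

definition D0 :: "(nat \<Rightarrow> 'k::finite \<Rightarrow> real) \<Rightarrow> ('k \<Rightarrow> nat \<Rightarrow> real) \<Rightarrow> nat \<Rightarrow> nat \<Rightarrow> real" where
  "D0 A W j i = (\<Sum>k\<in>UNIV. A j k * W k i)"

definition Sigma_A :: "nat \<Rightarrow> (nat \<Rightarrow> 'k::finite \<Rightarrow> real) \<Rightarrow> real^'k^'k" where
  "Sigma_A p A = (\<chi> k l. \<Sum>j<p. A j k * A j l)"

definition Sigma_W :: "nat \<Rightarrow> ('k::finite \<Rightarrow> nat \<Rightarrow> real) \<Rightarrow> real^'k^'k" where
  "Sigma_W n W = (\<chi> k l. (\<Sum>i<n. W k i * W l i) / real n)"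

(* Xi = [xi_1..xi_K] are left singular vectors of D0 for its K largest singular values
   s (decreasing, index None first), Xi = A V, and xi_1, V_1 have positive entries *)
definition pop_simplex_data ::
  "nat \<Rightarrow> nat \<Rightarrow> (nat \<Rightarrow> 'd::{finite,linorder} option \<Rightarrow> real) \<Rightarrow> ('d option \<Rightarrow> nat \<Rightarrow> real)
   \<Rightarrow> (nat \<Rightarrow> 'd option \<Rightarrow> real) \<Rightarrow> ('d option \<Rightarrow> real) \<Rightarrow> ('d option \<Rightarrow> 'd option \<Rightarrow> real) \<Rightarrow> bool" where
  "pop_simplex_data p n A W Xi s V \<longleftrightarrow>
     (let G = (\<lambda>j j'. \<Sum>i<n. D0 A W j i * D0 A W j' i) in
     (\<forall>c c'. (\<Sum>j<p. Xi j c * Xi j c') = (if c = c' then 1 else 0)) \<and>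
     (\<forall>c. 0 \<le> s c) \<and>
     (\<forall>c. \<forall>j<p. (\<Sum>j'<p. G j j' * Xi j' c) = (s c)\<^sup>2 * Xi j c) \<and>
     (\<forall>c c'. c \<le> c' \<longrightarrow> s c' \<le> s c) \<and>
     (\<forall>x lam. (\<exists>j<p. x j \<noteq> 0) \<and> (\<forall>j<p. (\<Sum>j'<p. G j j' * x j') = lam * x j) \<and>
              (\<forall>c. (\<Sum>j<p. x j * Xi j c) = 0) \<longrightarrow> (\<forall>c. lam \<le> (s c)\<^sup>2)) \<and>
     (\<forall>j<p. \<forall>c. Xi j c = (\<Sum>t\<in>UNIV. A j t * V t c)) \<and>
     (\<forall>j<p. 0 < Xi j None) \<and> (\<forall>t. 0 < V t None))"

definition vstar :: "('d::finite option \<Rightarrow> 'd option \<Rightarrow> real) \<Rightarrow> 'd option \<Rightarrow> real^'d" where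
  "vstar V t = (\<chi> d. V t (Some d) / V t None)"

end

theory Submission
  imports Defs
begin

lemma sum_UNIV_option:
  "(\<Sum>t\<in>(UNIV::'a::finite option set). f t) = f None + (\<Sum>d\<in>UNIV. f (Some d))"
proof -
  have "(\<Sum>t\<in>insert None (range Some). f t) = f None + (\<Sum>t\<in>range Some. f t)"
    by (subst sum.insert) auto
  also have "(\<Sum>t\<in>range Some. f t) = (\<Sum>d\<in>UNIV. f (Some d))"
    by (subst sum.reindex) (auto simp: inj_on_def)
  finally show ?thesis by (simp add: UNIV_option_conv[symmetric])
qed

lemma norm_sq_vec: "(norm (x::real^'n))^2 = (\<Sum>i\<in>UNIV. (x$i)^2)"
proof -
  have "(norm x)^2 = x \<bullet> x" by (rule power2_norm_eq_inner)
  then show ?thesis by (simp add: inner_vec_def power2_eq_square)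
qed

lemma MVVt:
  fixes V M :: "real^'k^'k"
  assumes "transpose V ** M ** V = mat 1"
  shows "M ** V ** transpose V = mat 1"
proof -
  have "transpose V ** (M ** V) = mat 1" using assms by (simp add: matrix_mul_assoc)
  then have "(M ** V) ** transpose V = mat 1" using matrix_left_right_inverse by blast
  then show ?thesis by simp
qed

lemma key_ineq:
  fixes V M :: "real^'k^'k" and u :: "real^'k"
  assumes VMV: "transpose V ** M ** V = mat 1"
    and apos: "0 < a"
    and lo: "\<And>w. a * (norm w)^2 \<le> w \<bullet> (M *v w)"
    and up: "\<And>w. norm (M *v w) \<le> b * norm w"
  shows "a * (norm u)^2 \<le> b^2 * (norm (transpose V *v u))^2"
    and "a * (norm (transpose V *v u))^2 \<le> (norm u)^2"
proof -
  define g where "g = transpose V *v u"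
  define w where "w = V *v g"
  have uMw: "u = M *v w"
    using MVVt[OF VMV] unfolding w_def g_def
    by (metis matrix_vector_mul_assoc matrix_vector_mul_lid)
  have gg: "g \<bullet> g = u \<bullet> w"
    unfolding w_def g_def by (simp add: dot_lmul_matrix)
  have uw: "u \<bullet> w = w \<bullet> (M *v w)" using uMw by (simp add: inner_commute)
  have nu: "norm u \<le> b * norm w" using up uMw by simp
  have b0: "0 \<le> b"
  proof -
    have "0 \<le> b * norm (axis undefined (1::real) :: real^'k)"
      by (meson norm_ge_zero order_trans up)
    moreover have "norm (axis undefined (1::real) :: real^'k) = 1" by simp
    ultimately show ?thesis by simp
  qed
  have "a * (norm u)^2 \<le> a * (b * norm w)^2"
    using nu apos by (intro mult_left_mono power_mono) auto
  also have "\<dots> = b^2 * (a * (norm w)^2)" by (simp add: power_mult_distrib)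
  also have "\<dots> \<le> b^2 * (g \<bullet> g)" using lo[of w] gg uw by (intro mult_left_mono) auto
  finally show "a * (norm u)^2 \<le> b^2 * (norm (transpose V *v u))^2"
    by (simp add: g_def power2_norm_eq_inner)
  have cs: "u \<bullet> w \<le> norm u * norm w" by (rule norm_cauchy_schwarz)
  have aw: "a * norm w \<le> norm u"
  proof (cases "w = 0")
    case True then show ?thesis by simp
  next
    case False
    then have "0 < norm w" by simp
    have "a * norm w * norm w \<le> norm u * norm w"
      using lo[of w] uw cs by (simp add: power2_eq_square mult.assoc)
    then show ?thesis using \<open>0 < norm w\<close> by simp
  qed
  have "a * (g \<bullet> g) \<le> a * (norm u * norm w)" using gg cs apos by simp
  also have "\<dots> = norm u * (a * norm w)" by simp
  also have "\<dots> \<le> norm u * norm u" using aw by (intro mult_left_mono) auto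
  finally have calc: "a * (g \<bullet> g) \<le> norm u * norm u" .
  have eq: "(norm g)^2 = g \<bullet> g" by (rule power2_norm_eq_inner)
  have "a * (norm g)^2 \<le> (norm u)^2" using calc eq by (metis power2_eq_square)
  then show "a * (norm (transpose V *v u))^2 \<le> (norm u)^2" by (simp only: g_def)
qed

lemma col_quad:
  fixes V M :: "real^'k^'k"
  assumes VMV: "transpose V ** M ** V = mat 1"
  shows "(V *v e) \<bullet> (M *v (V *v e)) = e \<bullet> e"
proof -
  have "(V *v e) \<bullet> (M *v (V *v e)) = (e v* transpose V) \<bullet> (M *v (V *v e))"
    by (metis transpose_matrix_vector transpose_transpose)
  also have "\<dots> = e \<bullet> (transpose V *v (M *v (V *v e)))" by (rule dot_lmul_matrix)
  also have "transpose V *v (M *v (V *v e)) = (transpose V ** M ** V) *v e"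
    by (simp add: matrix_vector_mul_assoc matrix_mul_assoc)
  finally show ?thesis using VMV by simp
qed

lemma core:
  fixes V M :: "real^('d::finite option)^('d option)" and a b R :: real
  assumes VMV: "transpose V ** M ** V = mat 1"
    and apos: "0 < a"
    and lo: "\<And>w. a * (norm w)^2 \<le> w \<bullet> (M *v w)"
    and up: "\<And>w. norm (M *v w) \<le> b * norm w"
    and xpos: "\<And>t. 0 < V$t$None"
    and ratio: "\<And>k l. V$l$None \<le> R * V$k$None"
  defines "vs \<equiv> (\<lambda>t. (\<chi> d. V$t$(Some d) / V$t$None) :: real^'d)"
  shows "\<And>\<alpha>::real^'d option. (\<Sum>t\<in>UNIV. \<alpha>$t) = 0 \<Longrightarrow> (a/b) * norm \<alpha> \<le> norm (\<Sum>t\<in>UNIV. \<alpha>$t *\<^sub>R vs t)"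
    and "\<And>k. norm (vs k) \<le> R * sqrt (real CARD('d option) * b / a)"
proof -
  define x where "x = V *v axis None 1"
  have xt: "\<And>t. x$t = V$t$None"
    unfolding x_def by (simp add: matrix_vector_mult_basis column_def)
  have Qx: "x \<bullet> (M *v x) = 1" unfolding x_def using col_quad[OF VMV] by simp
  have ax: "a * (norm x)^2 \<le> 1" using lo[of x] Qx by simp
  have "1 \<le> norm x * norm (M *v x)" using Qx norm_cauchy_schwarz[of x "M *v x"] by simp
  also have "\<dots> \<le> norm x * (b * norm x)" using up[of x] by (intro mult_left_mono) auto
  finally have bx: "1 \<le> b * (norm x)^2" by (simp add: power2_eq_square mult.commute mult.left_commute)
  have bpos: "0 < b"
  proof -
    have "0 < (norm x)^2" using bx by (cases "x = 0") auto
    then show ?thesis using bx by (smt (verit) mult_nonpos_nonneg)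
  qed
  have xsq: "\<And>t. a * (V$t$None)^2 \<le> 1"
  proof -
    fix t
    have "\<bar>x$t\<bar> \<le> norm x" by (rule component_le_norm_cart)
    then have "(x$t)^2 \<le> (norm x)^2" using power_mono[of "\<bar>x$t\<bar>" "norm x" 2] by simp
    then have "a * (x$t)^2 \<le> a * (norm x)^2" using apos by simp
    then show "a * (V$t$None)^2 \<le> 1" using ax xt by simp
  qed
  show "(a/b) * norm \<alpha> \<le> norm (\<Sum>t\<in>UNIV. \<alpha>$t *\<^sub>R vs t)"
    if sa: "(\<Sum>t\<in>UNIV. \<alpha>$t) = 0" for \<alpha> :: "real^'d option"
  proof -
    define u where "u = (\<chi> t. \<alpha>$t / V$t$None)"
    define g where "g = transpose V *v u"
    have gc: "\<And>c. g$c = (\<Sum>t\<in>UNIV. V$t$c * (\<alpha>$t / V$t$None))"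
      unfolding g_def u_def by (simp add: vector_matrix_mult_def) (simp add: mult.commute)
    have nz: "\<And>t. V$t$None \<noteq> 0" using xpos by (metis less_irrefl)
    have gN: "g$None = 0" using gc[of None] sa nz by simp
    have gS: "\<And>d. g$(Some d) = (\<Sum>t\<in>UNIV. \<alpha>$t *\<^sub>R vs t)$d"
      unfolding gc vs_def by (simp add: sum_component field_simps)
    have ng: "(norm g)^2 = (norm (\<Sum>t\<in>UNIV. \<alpha>$t *\<^sub>R vs t))^2"
      by (simp add: norm_sq_vec sum_UNIV_option gN gS)
    have nu: "a * (norm \<alpha>)^2 \<le> (norm u)^2"
    proof -
      have "a * (norm \<alpha>)^2 = (\<Sum>t\<in>UNIV. a * (\<alpha>$t)^2)" by (simp add: norm_sq_vec sum_distrib_left)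
      also have "\<dots> \<le> (\<Sum>t\<in>UNIV. (u$t)^2)"
      proof (rule sum_mono)
        fix t :: "'d option"
        have p: "0 < (V$t$None)^2" using xpos[of t] by simp
        have "a * (\<alpha>$t)^2 * (V$t$None)^2 \<le> (\<alpha>$t)^2"
          using mult_left_mono[OF xsq[of t], of "(\<alpha>$t)^2"] by (simp add: mult_ac)
        then show "a * (\<alpha>$t)^2 \<le> (u$t)^2"
          using p by (simp add: u_def power_divide pos_le_divide_eq)
      qed
      also have "\<dots> = (norm u)^2" by (simp add: norm_sq_vec)
      finally show ?thesis .
    qed
    have k1: "a * (norm u)^2 \<le> b^2 * (norm g)^2"
      unfolding g_def by (rule key_ineq(1)[OF VMV apos lo up])
    have "(a * norm \<alpha>)^2 \<le> (b * norm (\<Sum>t\<in>UNIV. \<alpha>$t *\<^sub>R vs t))^2"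
    proof -
      have "(a * norm \<alpha>)^2 = a * (a * (norm \<alpha>)^2)" by (simp add: power2_eq_square)
      also have "\<dots> \<le> a * (norm u)^2" using nu apos by simp
      also have "\<dots> \<le> b^2 * (norm g)^2" by (rule k1)
      finally show ?thesis using ng by (simp add: power_mult_distrib)
    qed
    then have "a * norm \<alpha> \<le> b * norm (\<Sum>t\<in>UNIV. \<alpha>$t *\<^sub>R vs t)"
      by (rule power2_le_imp_le) (use bpos in simp)
    then show ?thesis using bpos by (simp add: divide_simps mult.commute)
  qed
  show "norm (vs k) \<le> R * sqrt (real CARD('d option) * b / a)" for k
  proof -
    define g where "g = transpose V *v axis k 1"
    have gc: "\<And>c. g$c = V$k$c"
      unfolding g_def by (simp add: matrix_vector_mult_basis column_transpose row_def)
    have k2: "a * (norm g)^2 \<le> 1"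
      unfolding g_def using key_ineq(2)[OF VMV apos lo up, of "axis k 1"] by simp
    have xk: "0 < V$k$None" by (rule xpos)
    have Rpos: "0 < R" using ratio[of k k] xk
      by (smt (verit) mult_le_cancel_right1)
    have nvs: "(norm (vs k))^2 * (V$k$None)^2 \<le> (norm g)^2"
    proof -
      have "(norm (vs k))^2 = (\<Sum>d\<in>UNIV. (V$k$(Some d))^2) / (V$k$None)^2"
        by (simp add: norm_sq_vec vs_def power_divide sum_divide_distrib)
      then have "(norm (vs k))^2 * (V$k$None)^2 = (\<Sum>d\<in>UNIV. (V$k$(Some d))^2)"
        using xk by simp
      also have "\<dots> \<le> (V$k$None)^2 + (\<Sum>d\<in>UNIV. (V$k$(Some d))^2)" by simp
      also have "\<dots> = (norm g)^2" by (simp add: norm_sq_vec sum_UNIV_option gc)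
      finally show ?thesis .
    qed
    have "(norm x)^2 \<le> real CARD('d option) * (R^2 * (V$k$None)^2)"
    proof -
      have "(norm x)^2 = (\<Sum>l\<in>UNIV. (V$l$None)^2)" by (simp add: norm_sq_vec xt)
      also have "\<dots> \<le> (\<Sum>l\<in>(UNIV::'d option set). R^2 * (V$k$None)^2)"
      proof (rule sum_mono)
        fix l :: "'d option"
        have "V$l$None \<le> R * V$k$None" by (rule ratio)
        then have "(V$l$None)^2 \<le> (R * V$k$None)^2"
          by (rule power_mono) (use xpos[of l] in auto)
        then show "(V$l$None)^2 \<le> R^2 * (V$k$None)^2" by (simp add: power_mult_distrib)
      qed
      also have "\<dots> = real CARD('d option) * (R^2 * (V$k$None)^2)" by simp
      finally show ?thesis .
    qed
    then have c1: "1 \<le> b * real CARD('d option) * R^2 * (V$k$None)^2"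
      using bx bpos by (smt (verit, best) mult.assoc mult_left_mono)
    have "(norm (vs k))^2 \<le> (R * sqrt (real CARD('d option) * b / a))^2"
    proof -
      have p: "0 < (V$k$None)^2" using xk by simp
      have "a * ((norm (vs k))^2 * (V$k$None)^2) \<le> 1"
        using k2 nvs apos by (smt (verit) mult_left_mono)
      then have "a * (norm (vs k))^2 * (V$k$None)^2 \<le> b * real CARD('d option) * R^2 * (V$k$None)^2"
        using c1 by (simp add: mult.assoc)
      then have "a * (norm (vs k))^2 \<le> b * real CARD('d option) * R^2"
        using p by simp
      then have "(norm (vs k))^2 \<le> b * real CARD('d option) * R^2 / a"
        using apos by (simp add: pos_le_divide_eq mult.commute)
      also have "\<dots> = (R * sqrt (real CARD('d option) * b / a))^2"
        using apos bpos by (simp add: power_mult_distrib mult_ac)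
      finally show ?thesis .
    qed
    then show ?thesis by (rule power2_le_imp_le) (use Rpos apos bpos in simp)
  qed
qed

lemma sum_axis_scale:
  fixes f :: "'k::finite \<Rightarrow> 'a::real_vector"
  shows "(\<Sum>t\<in>UNIV. (axis k (1::real) :: real^'k)$t *\<^sub>R f t) = f k"
proof -
  have "\<And>t. (axis k (1::real) :: real^'k)$t *\<^sub>R f t = (if t = k then f k else 0)"
    by (simp add: axis_def)
  then show ?thesis by simp
qed

lemma geom_dist:
  fixes vs :: "'d::finite option \<Rightarrow> real^'d" and \<sigma> B :: real
  assumes lin: "\<And>\<alpha>::real^'d option. (\<Sum>t\<in>UNIV. \<alpha>$t) = 0 \<Longrightarrow> \<sigma> * norm \<alpha> \<le> norm (\<Sum>t\<in>UNIV. \<alpha>$t *\<^sub>R vs t)"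
    and spos: "0 < \<sigma>"
    and bnd: "\<And>t. norm (vs t) \<le> B"
    and kl: "k \<noteq> l"
  shows "\<sigma> \<le> norm (vs k - vs l)" and "norm (vs k - vs l) \<le> 2 * B"
proof -
  define \<alpha> where "\<alpha> = (axis k 1 - axis l 1 :: real^'d option)"
  have ac: "\<And>t. \<alpha>$t = (if t = k then 1 else 0) - (if t = l then 1 else 0)"
    by (simp add: \<alpha>_def axis_def)
  have s0: "(\<Sum>t\<in>UNIV. \<alpha>$t) = 0" by (simp add: ac sum_subtractf)
  have sv: "(\<Sum>t\<in>UNIV. \<alpha>$t *\<^sub>R vs t) = vs k - vs l"
    by (simp add: \<alpha>_def scaleR_left_diff_distrib sum_subtractf sum_axis_scale)
  have "1 \<le> norm \<alpha>"
  proof -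
    have "\<bar>\<alpha>$k\<bar> \<le> norm \<alpha>" by (rule component_le_norm_cart)
    then show ?thesis using kl by (simp add: ac)
  qed
  then have "\<sigma> \<le> \<sigma> * norm \<alpha>" using spos by simp
  also have "\<dots> \<le> norm (vs k - vs l)" using lin[OF s0] sv by simp
  finally show "\<sigma> \<le> norm (vs k - vs l)" .
  have "norm (vs k - vs l) \<le> norm (vs k) + norm (vs l)" by (rule norm_triangle_ineq4)
  also have "\<dots> \<le> 2 * B" using bnd[of k] bnd[of l] by simp
  finally show "norm (vs k - vs l) \<le> 2 * B" .
qed

lemma geom_vol_upper:
  fixes vs :: "'d::finite option \<Rightarrow> real^'d" and B :: real
  assumes bnd: "\<And>t. norm (vs t) \<le> B"
  shows "measure lborel (convex hull (range vs)) \<le> measure lborel (cball (0::real^'d) B)"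
proof (rule measure_mono_fmeasurable)
  show "convex hull range vs \<subseteq> cball 0 B"
    by (rule hull_minimal) (use bnd in \<open>auto simp: convex_cball\<close>)
  have "compact (convex hull range vs)" by (intro compact_convex_hull finite_imp_compact) auto
  then show "convex hull range vs \<in> sets lborel" by (intro fmeasurableD fmeasurable_compact)
  show "cball 0 B \<in> fmeasurable lborel" by (intro fmeasurable_compact compact_cball)
qed

lemma geom_vol_lower:
  fixes vs :: "'d::finite option \<Rightarrow> real^'d" and \<sigma> :: real
  assumes lin: "\<And>\<alpha>::real^'d option. (\<Sum>t\<in>UNIV. \<alpha>$t) = 0 \<Longrightarrow> \<sigma> * norm \<alpha> \<le> norm (\<Sum>t\<in>UNIV. \<alpha>$t *\<^sub>R vs t)"
    and spos: "0 < \<sigma>"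
  shows "measure lborel (ball (0::real^'d) (\<sigma> / (real CARD('d option))^2)) \<le> measure lborel (convex hull (range vs))"
proof -
  define K where "K = real CARD('d option)"
  have Kc: "K = real CARD('d) + 1" unfolding K_def by (simp add: card_UNIV_option)
  have K1: "1 \<le> real CARD('d)" by (simp add: Suc_le_eq)
  define r where "r = 1 / K^2"
  have rpos: "0 < r" using Kc K1 by (simp add: r_def)
  define L where "L = (\<lambda>z::real^'d. \<Sum>d\<in>UNIV. z$d *\<^sub>R (vs (Some d) - vs None))"
  have linL: "linear L"
    unfolding L_def
    by (rule linearI) (simp_all add: sum.distrib scaleR_add_left scaleR_right.sum scaleR_sum_right)
  have Lbnd: "\<sigma> * norm z \<le> norm (L z)" for z
  proof -
    define \<alpha> where "\<alpha> = ((\<chi> t. case t of None \<Rightarrow> - (\<Sum>d\<in>UNIV. z$d) | Some d \<Rightarrow> z$d) :: real^'d option)"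
    have s0: "(\<Sum>t\<in>UNIV. \<alpha>$t) = 0" by (simp add: \<alpha>_def sum_UNIV_option)
    have sv: "(\<Sum>t\<in>UNIV. \<alpha>$t *\<^sub>R vs t) = L z"
      by (simp add: \<alpha>_def sum_UNIV_option L_def scaleR_diff_right sum_subtractf scaleR_sum_left)
    have "norm z \<le> norm \<alpha>"
    proof -
      have "(norm z)^2 \<le> (norm \<alpha>)^2"
        by (simp add: norm_sq_vec sum_UNIV_option \<alpha>_def)
      then show ?thesis by (rule power2_le_imp_le) simp
    qed
    then have "\<sigma> * norm z \<le> \<sigma> * norm \<alpha>" using spos by simp
    also have "\<dots> \<le> norm (L z)" using lin[OF s0] sv by simp
    finally show ?thesis .
  qed
  have injL: "inj L"
  proof (rule injI)
    fix z z' assume "L z = L z'"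
    then have "L (z - z') = 0" using linear_diff[OF linL] by simp
    then have "\<sigma> * norm (z - z') \<le> 0" using Lbnd[of "z - z'"] by simp
    then show "z = z'" using spos by (simp add: mult_le_0_iff)
  qed
  have surjL: "surj L" using linear_injective_imp_surjective[OF linL injL] by simp
  define c where "c = ((\<chi> d. 1 / K) :: real^'d)"
  define y0 where "y0 = vs None + L c"
  have sub: "ball y0 (\<sigma> * r) \<subseteq> convex hull (range vs)"
  proof
    fix y assume y: "y \<in> ball y0 (\<sigma> * r)"
    obtain z where z: "L z = y - vs None" using surjL by (metis surjD)
    have "\<sigma> * norm (z - c) \<le> norm (L (z - c))" by (rule Lbnd)
    also have "L (z - c) = y - y0" using linear_diff[OF linL] z by (simp add: y0_def)
    also have "norm (y - y0) < \<sigma> * r" using y by (simp add: dist_norm norm_minus_commute)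
    finally have zc: "norm (z - c) < r" using spos by simp
    have zd: "\<bar>z$d - 1/K\<bar> < r" for d
      using component_le_norm_cart[of "z - c" d] zc by (simp add: c_def)
    have rK: "r \<le> 1 / K" using Kc K1 by (simp add: r_def power2_eq_square divide_simps)
    have z0: "0 \<le> z$d" for d using zd[of d] rK by linarith
    have "(\<Sum>d\<in>UNIV. z$d) \<le> (\<Sum>d\<in>(UNIV::'d set). 1/K + r)"
      by (rule sum_mono) (use zd in \<open>smt (verit)\<close>)
    also have "\<dots> = real CARD('d) * (1/K + 1/K^2)" by (simp add: r_def)
    also have "\<dots> \<le> 1"
    proof -
      have Kp: "0 < K" using Kc K1 by simp
      have cK: "real CARD('d) = K - 1" using Kc by simp
      have "real CARD('d) * (1/K + 1/K^2) = (K - 1) * (K + 1) / K^2"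
        unfolding cK using Kp by (simp add: field_simps power2_eq_square)
      also have "\<dots> \<le> 1"
      proof -
        have "(K - 1) * (K + 1) \<le> 1 * K^2" by (simp add: algebra_simps power2_eq_square)
        moreover have "0 < K^2" using Kp by simp
        ultimately show ?thesis by (simp only: pos_divide_le_eq)
      qed
      finally show ?thesis .
    qed
    finally have zs: "(\<Sum>d\<in>UNIV. z$d) \<le> 1" .
    define w where "w = (\<lambda>t. case t of None \<Rightarrow> 1 - (\<Sum>d\<in>UNIV. z$d) | Some d \<Rightarrow> z$d)"
    have "(\<Sum>t\<in>UNIV. w t *\<^sub>R vs t) \<in> convex hull (range vs)"
    proof (rule convex_sum)
      show "(\<Sum>t\<in>UNIV. w t) = 1" by (simp add: w_def sum_UNIV_option)
      show "\<And>t. t \<in> UNIV \<Longrightarrow> 0 \<le> w t" using z0 zs by (auto simp: w_def split: option.split)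
      show "\<And>t. t \<in> UNIV \<Longrightarrow> vs t \<in> convex hull range vs" by (simp add: hull_inc)
    qed (auto simp: convex_convex_hull)
    moreover have "(\<Sum>t\<in>UNIV. w t *\<^sub>R vs t) = y"
    proof -
      have "(\<Sum>t\<in>UNIV. w t *\<^sub>R vs t) = vs None + L z"
        by (simp add: w_def sum_UNIV_option L_def scaleR_diff_right sum_subtractf scaleR_diff_left scaleR_sum_left)
      then show ?thesis using z by simp
    qed
    ultimately show "y \<in> convex hull (range vs)" by simp
  qed
  have "measure lborel (ball y0 (\<sigma> * r)) \<le> measure lborel (convex hull (range vs))"
  proof (rule measure_mono_fmeasurable[OF sub])
    show "ball y0 (\<sigma> * r) \<in> sets lborel" by simp
    show "convex hull range vs \<in> fmeasurable lborel"
      by (intro fmeasurable_compact compact_convex_hull finite_imp_compact) auto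
  qed
  moreover have "measure lborel (ball y0 (\<sigma> * r)) = measure lborel (ball (0::real^'d) (\<sigma> * r))"
    using content_ball_conv_unit_ball[of "\<sigma> * r" y0] content_ball_conv_unit_ball[of "\<sigma> * r" "0::real^'d"]
      spos rpos by simp
  ultimately show ?thesis by (simp add: r_def K_def)
qed

definition qf :: "real^'k^'k \<Rightarrow> real^'k \<Rightarrow> real" where
  "qf S v = v \<bullet> (S *v v)"

lemma qf_scale: "qf S (c *\<^sub>R v) = c^2 * qf S v"
  by (simp add: qf_def matrix_vector_mult_scaleR power2_eq_square)

lemma qf_add_sym:
  assumes "transpose S = S"
  shows "qf S (w + t *\<^sub>R v) = qf S w + 2 * t * (v \<bullet> (S *v w)) + t^2 * qf S v"
proof -
  have sym: "w \<bullet> (S *v v) = v \<bullet> (S *v w)"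
  proof -
    have "w \<bullet> (S *v v) = (w v* S) \<bullet> v" by (simp add: dot_lmul_matrix)
    also have "w v* S = transpose S *v w" by simp
    also have "\<dots> = S *v w" using assms by simp
    finally show ?thesis by (simp add: inner_commute)
  qed
  show ?thesis
    unfolding qf_def
    by (simp add: matrix_vector_right_distrib matrix_vector_mult_scaleR inner_add_left inner_add_right
        sym power2_eq_square algebra_simps)
qed

lemma quad_nonneg_zero:
  fixes c d :: real
  assumes "\<And>t. 0 \<le> 2 * t * c + t^2 * d"
  shows "c = 0"
proof (rule ccontr)
  assume cne: "c \<noteq> 0"
  define e where "e = \<bar>d\<bar>"
  have e0: "0 \<le> e" by (simp add: e_def)
  define r where "r = 1 / (e + 1)"
  have rp: "0 < r" using e0 by (simp add: r_def)
  have re: "r * e < 1" using e0 by (simp add: r_def)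
  define t where "t = - c * r"
  have "2 * t * c + t^2 * d \<le> 2 * t * c + t^2 * e"
    unfolding e_def by (intro add_left_mono mult_left_mono) auto
  also have "\<dots> = c^2 * r * (r * e - 2)"
    unfolding t_def by (simp add: power2_eq_square algebra_simps)
  also have "\<dots> < 0"
  proof -
    have "0 < c^2 * r" using cne rp by simp
    moreover have "r * e - 2 < 0" using re by simp
    ultimately show ?thesis by (simp add: mult_pos_neg)
  qed
  finally show False using assms[of t] by simp
qed

lemma variational:
  fixes S :: "real^'k::finite^'k"
  assumes sym: "transpose S = S"
  shows "\<exists>w. norm w = 1 \<and> (\<forall>v. (qf S w) * (norm v)^2 \<le> qf S v) \<and> S *v w = qf S w *\<^sub>R w"
proof -
  have cont: "continuous_on (sphere 0 1) (qf S)"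
    unfolding qf_def by (intro continuous_intros linear_continuous_on matrix_vector_mul_linear bounded_linear_inner_right)
  have ne: "sphere (0::real^'k) 1 \<noteq> {}"
    using norm_axis_1[of undefined] by (metis mem_sphere_0 empty_iff)
  obtain w where w: "w \<in> sphere 0 1" and wmin: "\<And>y. y \<in> sphere 0 1 \<Longrightarrow> qf S w \<le> qf S y"
    using continuous_attains_inf[OF compact_sphere ne cont] by blast
  have nw: "norm w = 1" using w by simp
  define \<mu> where "\<mu> = qf S w"
  have glob: "\<mu> * (norm v)^2 \<le> qf S v" for v
  proof (cases "v = 0")
    case True then show ?thesis by (simp add: qf_def)
  next
    case False
    then have np: "0 < norm v" by simp
    have "\<mu> \<le> qf S ((1 / norm v) *\<^sub>R v)" unfolding \<mu>_def by (rule wmin) (use np in simp)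
    also have "\<dots> = qf S v / (norm v)^2" by (simp add: qf_scale power_divide)
    finally show ?thesis using np by (simp add: pos_le_divide_eq)
  qed
  have orth: "v \<bullet> (S *v w - \<mu> *\<^sub>R w) = 0" for v
  proof -
    have "0 \<le> 2 * t * (v \<bullet> (S *v w - \<mu> *\<^sub>R w)) + t^2 * (qf S v - \<mu> * (norm v)^2)" for t
    proof -
      have "\<mu> * (norm (w + t *\<^sub>R v))^2 \<le> qf S (w + t *\<^sub>R v)" by (rule glob)
      moreover have "(norm (w + t *\<^sub>R v))^2 = 1 + 2 * t * (v \<bullet> w) + t^2 * (norm v)^2"
      proof -
        have "(norm (w + t *\<^sub>R v))^2 = (w + t *\<^sub>R v) \<bullet> (w + t *\<^sub>R v)" by (rule power2_norm_eq_inner)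
        also have "\<dots> = w \<bullet> w + 2 * t * (v \<bullet> w) + t^2 * (v \<bullet> v)"
          by (simp add: inner_add_left inner_add_right inner_commute power2_eq_square algebra_simps)
        also have "w \<bullet> w = 1" using nw by (metis norm_eq_1 )
        also have "v \<bullet> v = (norm v)^2" by (simp add: power2_norm_eq_inner)
        finally show ?thesis .
      qed
      moreover have "qf S w = \<mu>" by (simp add: \<mu>_def)
      ultimately show ?thesis
        using qf_add_sym[OF sym, of w t v]
        by (simp add: inner_diff_right algebra_simps)
    qed
    then show ?thesis by (rule quad_nonneg_zero)
  qed
  have "S *v w - \<mu> *\<^sub>R w = 0"
    using orth[of "S *v w - \<mu> *\<^sub>R w"] by simp
  then have "S *v w = \<mu> *\<^sub>R w" by simp
  then show ?thesis using nw glob by (auto simp: \<mu>_def)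
qed

lemma lambda_min_diag:
  fixes S :: "real^'k::finite^'k"
  assumes sym: "transpose S = S" and lm: "lambda_min_ge S c"
  shows "c \<le> S$k$k"
proof -
  obtain w where nw: "norm w = 1" and gl: "\<And>v. qf S w * (norm v)^2 \<le> qf S v" and ev: "S *v w = qf S w *\<^sub>R w"
    using variational[OF sym] by blast
  have "eigpair S (qf S w) w" using nw ev by (auto simp: eigpair_def)
  then have "c \<le> qf S w" using lm by (auto simp: lambda_min_ge_def)
  also have "\<dots> = qf S w * (norm (axis k (1::real) :: real^'k))^2" by simp
  also have "\<dots> \<le> qf S (axis k 1)" by (rule gl)
  also have "\<dots> = S$k$k" by (simp add: qf_def matrix_vector_mult_basis column_def inner_axis')
  finally show ?thesis .
qed

lemma pd_from_inv:
  fixes S :: "real^'k::finite^'k"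
  assumes sym: "transpose S = S" and psd: "\<And>v. 0 \<le> qf S v" and inv: "invertible S"
  shows "\<exists>a0>0. \<forall>v. a0 * (norm v)^2 \<le> qf S v"
proof -
  obtain w where nw: "norm w = 1" and gl: "\<And>v. qf S w * (norm v)^2 \<le> qf S v" and ev: "S *v w = qf S w *\<^sub>R w"
    using variational[OF sym] by blast
  have "qf S w \<noteq> 0"
  proof
    assume "qf S w = 0"
    then have "S *v w = 0" using ev by simp
    moreover obtain S' where "S' ** S = mat 1" using inv invertible_def by blast
    ultimately have "w = 0" by (metis matrix_vector_mul_assoc matrix_vector_mul_lid matrix_vector_mult_0_right)
    then show False using nw by simp
  qed
  then have "0 < qf S w" using psd[of w] by simp
  then show ?thesis using gl by blast
qed

lemma swap3:
  "(\<Sum>u\<in>U. \<Sum>t\<in>T. \<Sum>j\<in>J. f u t j) = (\<Sum>j\<in>J. \<Sum>t\<in>T. \<Sum>u\<in>U. f u t j)"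
proof -
  have "(\<Sum>u\<in>U. \<Sum>t\<in>T. \<Sum>j\<in>J. f u t j) = (\<Sum>t\<in>T. \<Sum>u\<in>U. \<Sum>j\<in>J. f u t j)" by (rule sum.swap)
  also have "\<dots> = (\<Sum>t\<in>T. \<Sum>j\<in>J. \<Sum>u\<in>U. f u t j)" by (rule sum.cong[OF refl sum.swap])
  also have "\<dots> = (\<Sum>j\<in>J. \<Sum>t\<in>T. \<Sum>u\<in>U. f u t j)" by (rule sum.swap)
  finally show ?thesis .
qed

lemma swap4:
  "(\<Sum>a\<in>A. \<Sum>b\<in>B. \<Sum>c\<in>C. \<Sum>d\<in>D. f a b c d) = (\<Sum>c\<in>C. \<Sum>d\<in>D. \<Sum>b\<in>B. \<Sum>a\<in>A. f a b c d)"
proof -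
  have "(\<Sum>a\<in>A. \<Sum>b\<in>B. \<Sum>c\<in>C. \<Sum>d\<in>D. f a b c d) = (\<Sum>b\<in>B. \<Sum>a\<in>A. \<Sum>c\<in>C. \<Sum>d\<in>D. f a b c d)" by (rule sum.swap)
  also have "\<dots> = (\<Sum>b\<in>B. \<Sum>c\<in>C. \<Sum>a\<in>A. \<Sum>d\<in>D. f a b c d)" by (rule sum.cong[OF refl sum.swap])
  also have "\<dots> = (\<Sum>c\<in>C. \<Sum>b\<in>B. \<Sum>a\<in>A. \<Sum>d\<in>D. f a b c d)" by (rule sum.swap)
  also have "\<dots> = (\<Sum>c\<in>C. \<Sum>b\<in>B. \<Sum>d\<in>D. \<Sum>a\<in>A. f a b c d)" by (rule sum.cong[OF refl sum.cong[OF refl sum.swap]])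
  also have "\<dots> = (\<Sum>c\<in>C. \<Sum>d\<in>D. \<Sum>b\<in>B. \<Sum>a\<in>A. f a b c d)" by (rule sum.cong[OF refl sum.swap])
  finally show ?thesis .
qed

lemma anchor_sum:
  fixes A :: "'k::finite \<Rightarrow> real"
  assumes "\<And>l. l \<noteq> k \<Longrightarrow> A l = 0"
  shows "(\<Sum>l\<in>UNIV. A l * f l) = A k * f k"
proof -
  have "(\<Sum>l\<in>UNIV. A l * f l) = (\<Sum>l\<in>UNIV. if l = k then A k * f k else 0)"
    by (rule sum.cong) (auto simp: assms)
  then show ?thesis by simp
qed

lemma model_VMV:
  fixes A :: "nat \<Rightarrow> 'k::finite \<Rightarrow> real" and Xi :: "nat \<Rightarrow> 'k \<Rightarrow> real" and V :: "'k \<Rightarrow> 'k \<Rightarrow> real"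
  assumes orth: "\<And>c c'. (\<Sum>j<p. Xi j c * Xi j c') = (if c = c' then 1 else 0)"
    and XAV: "\<And>j c. j < p \<Longrightarrow> Xi j c = (\<Sum>t\<in>UNIV. A j t * V t c)"
  shows "transpose (\<chi> t c. V t c) ** Sigma_A p A ** (\<chi> t c. V t c) = mat 1"
proof -
  have "(\<Sum>u\<in>UNIV. (\<Sum>t\<in>UNIV. V t c * (\<Sum>j<p. A j t * A j u)) * V u c') = (if c = c' then 1 else 0)" for c c'
  proof -
    have "(\<Sum>u\<in>UNIV. (\<Sum>t\<in>UNIV. V t c * (\<Sum>j<p. A j t * A j u)) * V u c')
        = (\<Sum>u\<in>UNIV. \<Sum>t\<in>UNIV. \<Sum>j<p. (A j t * V t c) * (A j u * V u c'))"
      by (simp add: sum_distrib_left sum_distrib_right mult_ac)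
    also have "\<dots> = (\<Sum>j<p. \<Sum>t\<in>UNIV. \<Sum>u\<in>UNIV. (A j t * V t c) * (A j u * V u c'))"
      by (rule swap3)
    also have "\<dots> = (\<Sum>j<p. (\<Sum>t\<in>UNIV. A j t * V t c) * (\<Sum>u\<in>UNIV. A j u * V u c'))"
      by (simp add: sum_product)
    also have "\<dots> = (\<Sum>j<p. Xi j c * Xi j c')" by (rule sum.cong[OF refl]) (simp add: XAV)
    also have "\<dots> = (if c = c' then 1 else 0)" by (rule orth)
    finally show ?thesis .
  qed
  then show ?thesis
    by (simp add: matrix_matrix_mult_def Sigma_A_def mat_def vec_eq_iff transpose_def)
qed

lemma model_eigen:
  fixes A :: "nat \<Rightarrow> 'k::finite \<Rightarrow> real" and W :: "'k \<Rightarrow> nat \<Rightarrow> real"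
    and Xi :: "nat \<Rightarrow> 'k \<Rightarrow> real" and V :: "'k \<Rightarrow> 'k \<Rightarrow> real" and lam :: real
  assumes eig: "\<And>j. j < p \<Longrightarrow> (\<Sum>j'<p. (\<Sum>i<n. D0 A W j i * D0 A W j' i) * Xi j' c) = lam * Xi j c"
    and XAV: "\<And>j c. j < p \<Longrightarrow> Xi j c = (\<Sum>t\<in>UNIV. A j t * V t c)"
    and anchor: "\<And>k. \<exists>j<p. A j k \<noteq> 0 \<and> (\<forall>l. l \<noteq> k \<longrightarrow> A j l = 0)"
  shows "(\<Sum>l\<in>UNIV. (\<Sum>i<n. W k i * W l i) * (\<Sum>u\<in>UNIV. Sigma_A p A $ l $ u * V u c)) = lam * V k c"
proof -
  define Y where "Y l = (\<Sum>j'<p. A j' l * Xi j' c)" for l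
  define \<Phi> where "\<Phi> k = (\<Sum>l\<in>UNIV. (\<Sum>i<n. W k i * W l i) * Y l)" for k
  have Yeq: "Y l = (\<Sum>u\<in>UNIV. Sigma_A p A $ l $ u * V u c)" for l
  proof -
    have "Y l = (\<Sum>j'<p. \<Sum>u\<in>UNIV. A j' l * (A j' u * V u c))"
      unfolding Y_def by (rule sum.cong[OF refl]) (simp add: XAV sum_distrib_left)
    also have "\<dots> = (\<Sum>u\<in>UNIV. \<Sum>j'<p. A j' l * (A j' u * V u c))" by (rule sum.swap)
    also have "\<dots> = (\<Sum>u\<in>UNIV. Sigma_A p A $ l $ u * V u c)"
      by (simp add: Sigma_A_def) (rule sum.cong[OF refl], simp add: sum_distrib_left mult_ac)
    finally show ?thesis .
  qed
  have lhs: "(\<Sum>j'<p. (\<Sum>i<n. D0 A W j i * D0 A W j' i) * Xi j' c) = (\<Sum>k\<in>UNIV. A j k * \<Phi> k)" for j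
  proof -
    have "(\<Sum>j'<p. (\<Sum>i<n. D0 A W j i * D0 A W j' i) * Xi j' c)
        = (\<Sum>j'<p. \<Sum>i<n. \<Sum>k\<in>UNIV. \<Sum>l\<in>UNIV. A j k * W k i * W l i * (A j' l * Xi j' c))"
      by (simp add: D0_def sum_distrib_left sum_distrib_right sum_product mult_ac)
    also have "\<dots> = (\<Sum>k\<in>UNIV. \<Sum>l\<in>UNIV. \<Sum>i<n. \<Sum>j'<p. A j k * W k i * W l i * (A j' l * Xi j' c))"
      by (rule swap4)
    also have "\<dots> = (\<Sum>k\<in>UNIV. A j k * \<Phi> k)"
      by (simp add: \<Phi>_def Y_def sum_distrib_left sum_distrib_right mult_ac)
    finally show ?thesis .
  qed
  obtain j where j: "j < p" "A j k \<noteq> 0" "\<And>l. l \<noteq> k \<Longrightarrow> A j l = 0" using anchor[of k] by blast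
  have "A j k * \<Phi> k = A j k * (lam * V k c)"
  proof -
    have "A j k * \<Phi> k = (\<Sum>k'\<in>UNIV. A j k' * \<Phi> k')" using anchor_sum[where A="A j" and k=k and f=\<Phi>] j by simp
    also have "\<dots> = lam * Xi j c" using eig[OF j(1)] lhs[of j] by simp
    also have "\<dots> = lam * (\<Sum>t\<in>UNIV. A j t * V t c)" using XAV[OF j(1)] by simp
    also have "(\<Sum>t\<in>UNIV. A j t * V t c) = A j k * V k c" using anchor_sum[where A="A j" and k=k] j by simp
    finally show ?thesis by simp
  qed
  then have "\<Phi> k = lam * V k c" using j(2) by simp
  then show ?thesis unfolding \<Phi>_def using Yeq by simp
qed

lemma perron_path:
  fixes x :: "'k \<Rightarrow> real" and E :: "('k \<times> 'k) set" and \<rho> :: real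
  assumes edge: "\<And>a b. (a,b) \<in> E \<Longrightarrow> x b \<le> \<rho> * x a" and r1: "1 \<le> \<rho>" and xpos: "\<And>t. 0 < x t"
  shows "(k,l) \<in> ntrancl n E \<Longrightarrow> x l \<le> \<rho>^(Suc n) * x k"
proof (induction n arbitrary: l)
  case 0
  then show ?case using edge by simp
next
  case (Suc n)
  then obtain j where kj: "(k,j) \<in> ntrancl n E" and jl: "(j,l) \<in> Id \<union> E" by auto
  have xl: "x l \<le> \<rho> * x j"
  proof (cases "(j,l) \<in> E")
    case True then show ?thesis by (rule edge)
  next
    case False
    then have "l = j" using jl by auto
    then show ?thesis using r1 xpos[of j] by simp
  qed
  have "x j \<le> \<rho>^(Suc n) * x k" by (rule Suc.IH[OF kj])
  then have "\<rho> * x j \<le> \<rho> * (\<rho>^(Suc n) * x k)" using r1 by simp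
  then show ?case using xl by simp
qed

lemma perron_ratio:
  fixes x :: "'k::finite \<Rightarrow> real" and E :: "('k \<times> 'k) set" and \<rho> :: real
  assumes edge: "\<And>a b. (a,b) \<in> E \<Longrightarrow> x b \<le> \<rho> * x a" and r1: "1 \<le> \<rho>" and xpos: "\<And>t. 0 < x t"
    and irr: "\<And>i j. (i,j) \<in> E\<^sup>+"
  shows "x l \<le> \<rho>^(card E) * x k"
proof -
  have fin: "finite E" by (rule finite_subset[of _ UNIV]) auto
  have "E \<noteq> {}" using irr[of k k] by auto
  then have c: "Suc (card E - 1) = card E" using fin by (simp add: card_gt_0_iff)
  have "(k,l) \<in> ntrancl (card E - 1) E" using irr[of k l] finite_trancl_ntranl[OF fin] by simp
  from perron_path[OF edge r1 xpos this] show ?thesis by (simp only: c)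
qed

lemma qf_expand: "qf M w = (\<Sum>k\<in>UNIV. \<Sum>l\<in>UNIV. w$k * M$k$l * w$l)"
  by (simp add: qf_def inner_vec_def matrix_vector_mult_def sum_distrib_left mult_ac)

lemma qf_diff:
  fixes M N :: "real^'k::finite^'k"
  assumes "\<And>k l. \<bar>M$k$l - N$k$l\<bar> \<le> \<epsilon>"
  shows "\<bar>qf M w - qf N w\<bar> \<le> real CARD('k)^2 * \<epsilon> * (norm w)^2"
proof -
  have "qf M w - qf N w = (\<Sum>k\<in>UNIV. \<Sum>l\<in>UNIV. w$k * (M$k$l - N$k$l) * w$l)"
    by (simp add: qf_expand sum_subtractf[symmetric] algebra_simps)
  also have "\<bar>\<dots>\<bar> \<le> (\<Sum>k\<in>UNIV. \<Sum>l\<in>UNIV. \<bar>w$k * (M$k$l - N$k$l) * w$l\<bar>)"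
    by (rule order_trans[OF sum_abs sum_mono[OF sum_abs]])
  also have "\<dots> \<le> (\<Sum>k\<in>(UNIV::'k set). \<Sum>l\<in>(UNIV::'k set). \<epsilon> * (norm w)^2)"
  proof (rule sum_mono, rule sum_mono)
    fix k l
    have a: "\<bar>w$k\<bar> \<le> norm w" "\<bar>w$l\<bar> \<le> norm w" by (rule component_le_norm_cart)+
    have "\<bar>w$k * (M$k$l - N$k$l) * w$l\<bar> = \<bar>M$k$l - N$k$l\<bar> * (\<bar>w$k\<bar> * \<bar>w$l\<bar>)"
      by (simp add: abs_mult)
    also have "\<dots> \<le> \<epsilon> * (norm w * norm w)"
      by (rule mult_mono[OF assms mult_mono[OF a]]) (auto intro: order_trans[OF abs_ge_zero assms])
    finally show "\<bar>w$k * (M$k$l - N$k$l) * w$l\<bar> \<le> \<epsilon> * (norm w)^2" by (simp add: power2_eq_square)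
  qed
  also have "\<dots> = real CARD('k)^2 * \<epsilon> * (norm w)^2" by (simp add: power2_eq_square)
  finally show ?thesis .
qed

lemma mv_bound:
  fixes M :: "real^'k::finite^'k"
  assumes "\<And>k l. \<bar>M$k$l\<bar> \<le> c k l"
  shows "norm (M *v w) \<le> (\<Sum>k\<in>UNIV. \<Sum>l\<in>UNIV. c k l) * norm w"
proof -
  have "norm (M *v w) \<le> (\<Sum>k\<in>UNIV. \<bar>(M *v w)$k\<bar>)" by (rule norm_le_l1_cart)
  also have "\<dots> \<le> (\<Sum>k\<in>UNIV. \<Sum>l\<in>UNIV. c k l * norm w)"
  proof (rule sum_mono)
    fix k
    have "\<bar>(M *v w)$k\<bar> = \<bar>\<Sum>l\<in>UNIV. M$k$l * w$l\<bar>" by (simp add: matrix_vector_mult_def)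
    also have "\<dots> \<le> (\<Sum>l\<in>UNIV. \<bar>M$k$l * w$l\<bar>)" by (rule sum_abs)
    also have "\<dots> \<le> (\<Sum>l\<in>UNIV. c k l * norm w)"
    proof (rule sum_mono)
      fix l
      show "\<bar>M$k$l * w$l\<bar> \<le> c k l * norm w"
        unfolding abs_mult
        by (rule mult_mono[OF assms component_le_norm_cart]) (auto intro: order_trans[OF abs_ge_zero assms])
    qed
    finally show "\<bar>(M *v w)$k\<bar> \<le> (\<Sum>l\<in>UNIV. c k l * norm w)" .
  qed
  also have "\<dots> = (\<Sum>k\<in>UNIV. \<Sum>l\<in>UNIV. c k l) * norm w" by (simp add: sum_distrib_right)
  finally show ?thesis .
qed

lemma qf_SigmaA: "qf (Sigma_A p A) v = (\<Sum>j<p. (\<Sum>k\<in>UNIV. A j k * v$k)^2)"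
proof -
  have "qf (Sigma_A p A) v = (\<Sum>k\<in>UNIV. \<Sum>l\<in>UNIV. \<Sum>j<p. (A j k * v$k) * (A j l * v$l))"
    by (simp add: qf_expand Sigma_A_def sum_distrib_left sum_distrib_right mult_ac)
  also have "\<dots> = (\<Sum>j<p. \<Sum>l\<in>UNIV. \<Sum>k\<in>UNIV. (A j k * v$k) * (A j l * v$l))" by (rule swap3)
  also have "\<dots> = (\<Sum>j<p. (\<Sum>k\<in>UNIV. A j k * v$k)^2)"
    by (rule sum.cong[OF refl]) (simp add: power2_eq_square sum_product, rule sum.swap)
  finally show ?thesis .
qed

lemma qf_scaleR: "qf (c *\<^sub>R M) v = c * qf M v"
  by (simp add: qf_def scaleR_matrix_vector_assoc[symmetric])

lemma per_m:
  fixes p n :: nat and A :: "nat \<Rightarrow> 'd::{finite,linorder} option \<Rightarrow> real"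
    and W :: "'d option \<Rightarrow> nat \<Rightarrow> real" and S0 :: "real^'d option^'d option"
    and Xi :: "nat \<Rightarrow> 'd option \<Rightarrow> real" and s :: "'d option \<Rightarrow> real" and V :: "'d option \<Rightarrow> 'd option \<Rightarrow> real"
    and \<beta> c1 \<epsilon> a0 bb \<rho> :: real and E :: "('d option \<times> 'd option) set"
  assumes model: "plsi_model p n A W"
    and data: "pop_simplex_data p n A W Xi s V"
    and bpos: "0 < \<beta>" and n1: "1 \<le> n"
    and SWm: "lambda_min_ge (Sigma_W n W) c1" and c1p: "0 < c1"
    and close: "\<And>k l. \<bar>((1/\<beta>) *\<^sub>R Sigma_A p A)$k$l - S0$k$l\<bar> \<le> \<epsilon>"
    and e1: "\<epsilon> \<le> 1" and e2: "\<epsilon> \<le> a0 / (2 * real CARD('d option)^2)"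
    and edgeb: "\<And>k l. S0$k$l \<noteq> 0 \<Longrightarrow> S0$k$l / 2 \<le> ((1/\<beta>) *\<^sub>R Sigma_A p A)$k$l"
    and a0p: "0 < a0" and a0: "\<And>v. a0 * (norm v)^2 \<le> qf S0 v"
    and S0nn: "\<And>k l. 0 \<le> S0$k$l"
    and irr: "\<And>i j. (i, j) \<in> {(a, b). S0 $ a $ b \<noteq> 0}\<^sup>+"
    and bb_def: "bb = (\<Sum>k\<in>UNIV. \<Sum>l\<in>UNIV. \<bar>S0$k$l\<bar> + 1)"
    and \<rho>_def: "\<rho> = 1 + (\<Sum>k\<in>UNIV. \<Sum>l\<in>UNIV. if S0$k$l \<noteq> 0 then 2 * bb / (c1 * S0$k$l) else 0)"
    and E_def: "E = {(a, b). S0 $ a $ b \<noteq> 0}"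
  shows "(\<forall>\<alpha>::real^'d option. (\<Sum>t\<in>UNIV. \<alpha>$t) = 0 \<longrightarrow> ((a0/2)/bb) * norm \<alpha> \<le> norm (\<Sum>t\<in>UNIV. \<alpha>$t *\<^sub>R vstar V t))
     \<and> (\<forall>k. norm (vstar V k) \<le> \<rho>^(card E) * sqrt (real CARD('d option) * bb / (a0/2)))"
proof -
  define Mb where "Mb = (1/\<beta>) *\<^sub>R Sigma_A p A"
  define M where "M = Sigma_A p A"
  have Ment: "M$k$l = \<beta> * Mb$k$l" for k l using bpos by (simp add: M_def Mb_def)
  have MbM: "M = \<beta> *\<^sub>R Mb" using bpos by (simp add: M_def Mb_def)
  have Mnn: "0 \<le> M$k$l" for k l
    using model unfolding M_def Sigma_A_def plsi_model_def by (auto intro!: sum_nonneg)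
  define G where "G = (\<lambda>j j'. \<Sum>i<n. D0 A W j i * D0 A W j' i)"
  have orth: "\<And>c c'. (\<Sum>j<p. Xi j c * Xi j c') = (if c = c' then 1 else 0)"
    and eig: "\<And>c j. j < p \<Longrightarrow> (\<Sum>j'<p. G j j' * Xi j' c) = (s c)\<^sup>2 * Xi j c"
    and XAV: "\<And>j c. j < p \<Longrightarrow> Xi j c = (\<Sum>t\<in>UNIV. A j t * V t c)"
    and vpos: "\<And>t. 0 < V t None"
    using data unfolding pop_simplex_data_def Let_def G_def by auto
  define Vm where "Vm = ((\<chi> t c. V t c) :: real^'d option^'d option)"
  have VMV: "transpose Vm ** M ** Vm = mat 1"
    unfolding Vm_def M_def by (rule model_VMV[OF orth XAV])
  define K where "K = real CARD('d option)"
  have Kp: "0 < K" by (simp add: K_def)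
  have lo: "\<beta> * (a0/2) * (norm w)^2 \<le> w \<bullet> (M *v w)" for w
  proof -
    have d: "\<bar>qf Mb w - qf S0 w\<bar> \<le> K^2 * \<epsilon> * (norm w)^2"
      unfolding K_def by (rule qf_diff) (use close in \<open>simp add: Mb_def\<close>)
    have "K^2 * \<epsilon> \<le> a0 / 2" using e2 Kp by (simp add: K_def field_simps)
    then have "K^2 * \<epsilon> * (norm w)^2 \<le> a0 / 2 * (norm w)^2" by (rule mult_right_mono) simp
    then have "(a0/2) * (norm w)^2 \<le> qf Mb w" using d a0[of w] by linarith
    then have "\<beta> * ((a0/2) * (norm w)^2) \<le> \<beta> * qf Mb w" using bpos by simp
    also have "\<beta> * qf Mb w = qf M w" by (simp add: MbM qf_scaleR)
    finally show ?thesis by (simp add: qf_def mult.assoc)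
  qed
  have up: "norm (M *v w) \<le> (\<beta> * bb) * norm w" for w
  proof -
    have "norm (M *v w) \<le> (\<Sum>k\<in>UNIV. \<Sum>l\<in>UNIV. \<beta> * (\<bar>S0$k$l\<bar> + 1)) * norm w"
    proof (rule mv_bound)
      fix k l
      have "\<bar>Mb$k$l\<bar> \<le> \<bar>S0$k$l\<bar> + 1" using close[of k l] e1 by (simp add: Mb_def)
      then show "\<bar>M$k$l\<bar> \<le> \<beta> * (\<bar>S0$k$l\<bar> + 1)" using bpos by (simp add: Ment abs_mult)
    qed
    then show ?thesis by (simp add: bb_def sum_distrib_left)
  qed
  define x where "x t = V t None" for t
  have xpos: "0 < x t" for t using vpos by (simp add: x_def)
  have xnn: "0 \<le> x t" for t using xpos[of t] by simp
  have Wnn: "\<And>k i. i < n \<Longrightarrow> 0 \<le> W k i" and Wsum: "\<And>i. i < n \<Longrightarrow> (\<Sum>k\<in>UNIV. W k i) = 1"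
    and anchor: "\<And>k. \<exists>j<p. A j k \<noteq> 0 \<and> (\<forall>l. l \<noteq> k \<longrightarrow> A j l = 0)"
    using model unfolding plsi_model_def by auto
  have Wle: "W k i \<le> 1" if "i < n" for k i
  proof -
    have "W k i \<le> (\<Sum>k'\<in>UNIV. W k' i)" by (rule member_le_sum) (use Wnn that in auto)
    then show ?thesis using Wsum that by simp
  qed
  define P where "P k l = (\<Sum>i<n. W k i * W l i)" for k l
  have Pnn: "0 \<le> P k l" for k l unfolding P_def using Wnn by (auto intro!: sum_nonneg)
  have Ple: "P k l \<le> real n" for k l
  proof -
    have "P k l \<le> (\<Sum>i<n. 1)" unfolding P_def
      by (rule sum_mono) (use Wnn Wle in \<open>auto intro: mult_le_one\<close>)
    then show ?thesis by simp
  qed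
  have symW: "transpose (Sigma_W n W) = Sigma_W n W"
    by (simp add: Sigma_W_def transpose_def vec_eq_iff mult.commute)
  have Pkk: "real n * c1 \<le> P k k" for k
  proof -
    have "c1 \<le> Sigma_W n W $ k $ k" by (rule lambda_min_diag[OF symW SWm])
    then have "c1 \<le> P k k / real n" by (simp add: Sigma_W_def P_def)
    then show ?thesis using n1 by (simp add: pos_le_divide_eq mult.commute)
  qed
  define lam where "lam = (s None)^2"
  have eigx: "(\<Sum>l\<in>UNIV. P k l * (\<Sum>u\<in>UNIV. M$l$u * x u)) = lam * x k" for k
    unfolding P_def M_def x_def lam_def
    by (rule model_eigen[where c=None]) (use eig XAV anchor in \<open>auto simp: G_def\<close>)
  have Mle: "M$l$u \<le> \<beta> * (\<bar>S0$l$u\<bar> + 1)" for l u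
  proof -
    have "Mb$l$u \<le> \<bar>S0$l$u\<bar> + 1" using close[of l u] e1 by (simp add: Mb_def)
    then show ?thesis using bpos by (simp add: Ment)
  qed
  have bb0: "0 \<le> bb" unfolding bb_def by (auto intro!: sum_nonneg)
  have lamub: "lam \<le> real n * \<beta> * bb"
  proof -
    have "Max (range x) \<in> range x" by (rule Max_in) auto
    then obtain kmax where km: "x kmax = Max (range x)" by (metis imageE)
    have xle: "x l \<le> x kmax" for l using km by simp
    have "lam * x kmax = (\<Sum>l\<in>UNIV. P kmax l * (\<Sum>u\<in>UNIV. M$l$u * x u))" by (simp add: eigx)
    also have "\<dots> \<le> (\<Sum>l\<in>UNIV. P kmax l * (\<Sum>u\<in>UNIV. M$l$u * x kmax))"
      by (rule sum_mono, rule mult_left_mono, rule sum_mono, rule mult_left_mono)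
        (use xle Mnn Pnn in auto)
    also have "\<dots> = (\<Sum>l\<in>UNIV. P kmax l * (\<Sum>u\<in>UNIV. M$l$u)) * x kmax"
      by (simp add: sum_distrib_left sum_distrib_right mult_ac)
    finally have "lam * x kmax \<le> (\<Sum>l\<in>UNIV. P kmax l * (\<Sum>u\<in>UNIV. M$l$u)) * x kmax" .
    then have "lam \<le> (\<Sum>l\<in>UNIV. P kmax l * (\<Sum>u\<in>UNIV. M$l$u))" using xpos[of kmax] by simp
    also have "\<dots> \<le> (\<Sum>l\<in>UNIV. real n * (\<Sum>u\<in>UNIV. \<beta> * (\<bar>S0$l$u\<bar> + 1)))"
      by (rule sum_mono, rule mult_mono) (use Ple Mle Mnn bpos in \<open>auto intro: sum_mono sum_nonneg\<close>)
    also have "\<dots> = real n * \<beta> * bb" by (simp add: bb_def sum_distrib_left mult_ac)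
    finally show ?thesis .
  qed
  define f where "f k l = (if S0$k$l \<noteq> 0 then 2 * bb / (c1 * S0$k$l) else 0)" for k l
  have fnn: "0 \<le> f k l" for k l using S0nn[of k l] bb0 c1p by (simp add: f_def)
  have fle: "f k l \<le> \<rho> - 1" for k l
  proof -
    have "f k l \<le> (\<Sum>l'\<in>UNIV. f k l')" by (rule member_le_sum) (use fnn in auto)
    also have "\<dots> \<le> (\<Sum>k'\<in>UNIV. \<Sum>l'\<in>UNIV. f k' l')"
      by (rule member_le_sum[where f="\<lambda>k'. \<Sum>l'\<in>UNIV. f k' l'"]) (use fnn in \<open>auto intro: sum_nonneg\<close>)
    finally show ?thesis by (simp add: \<rho>_def f_def)
  qed
  have r1: "1 \<le> \<rho>" using fle[of undefined undefined] fnn[of undefined undefined] by simp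
  have edge: "x l \<le> \<rho> * x k" if kl: "(k, l) \<in> E" for k l
  proof -
    have S0p: "0 < S0$k$l" using kl S0nn[of k l] by (auto simp: E_def)
    have "P k k * (M$k$l * x l) \<le> P k k * (\<Sum>u\<in>UNIV. M$k$u * x u)"
      by (rule mult_left_mono, rule member_le_sum[where f="\<lambda>u. M$k$u * x u"])
        (use Mnn xnn Pnn in \<open>auto intro: mult_nonneg_nonneg\<close>)
    also have "\<dots> \<le> (\<Sum>l'\<in>UNIV. P k l' * (\<Sum>u\<in>UNIV. M$l'$u * x u))"
      by (rule member_le_sum[where f="\<lambda>l'. P k l' * (\<Sum>u\<in>UNIV. M$l'$u * x u)"])
        (use Mnn xnn Pnn in \<open>auto intro!: mult_nonneg_nonneg sum_nonneg\<close>)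
    also have "\<dots> = lam * x k" by (rule eigx)
    also have "\<dots> \<le> real n * \<beta> * bb * x k" using lamub xpos[of k] by (simp add: mult_right_mono)
    finally have up1: "P k k * (M$k$l * x l) \<le> real n * \<beta> * bb * x k" .
    have "S0$k$l / 2 \<le> Mb$k$l" using edgeb[of k l] S0p by (simp add: Mb_def)
    then have mk: "\<beta> * (S0$k$l / 2) \<le> M$k$l" using bpos by (simp add: Ment)
    define D where "D = real n * c1 * (\<beta> * (S0$k$l / 2))"
    have Dp: "0 < D" using n1 c1p bpos S0p by (simp add: D_def)
    have "real n * c1 * ((\<beta> * (S0$k$l / 2)) * x l) \<le> P k k * (M$k$l * x l)"
      by (rule mult_mono[OF Pkk mult_right_mono[OF mk]]) (use xpos[of l] Pnn Mnn n1 c1p bpos S0p in \<open>auto intro: less_imp_le\<close>)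
    then have "D * x l \<le> real n * \<beta> * bb * x k" using up1 by (simp add: D_def mult.assoc)
    then have "x l \<le> (real n * \<beta> * bb * x k) / D" using Dp by (simp add: pos_le_divide_eq mult.commute)
    also have "\<dots> = f k l * x k" using Dp n1 bpos c1p S0p by (simp add: D_def f_def field_simps)
    also have "\<dots> \<le> \<rho> * x k" using fle[of k l] xpos[of k] by (intro mult_right_mono) auto
    finally show ?thesis .
  qed
  have irrE: "\<And>i j. (i,j) \<in> E\<^sup>+" unfolding E_def by (rule irr)
  have ratio: "x l \<le> \<rho>^(card E) * x k" for k l
    by (rule perron_ratio[where E=E and x=x and \<rho>=\<rho>]) (use edge r1 xpos irrE in auto)
  have Vme: "Vm$t$c = V t c" for t c by (simp add: Vm_def)
  have apos2: "0 < \<beta> * (a0/2)" using bpos a0p by simp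
  have xposVm: "\<And>t. 0 < Vm$t$None" using xpos by (simp add: Vme x_def)
  have ratioVm: "\<And>k l. Vm$l$None \<le> \<rho>^(card E) * Vm$k$None" using ratio by (simp add: Vme x_def)
  note C = core[OF VMV apos2 lo up xposVm ratioVm]
  have vsE: "(\<chi> d. Vm$t$(Some d) / Vm$t$None) = vstar V t" for t by (simp add: Vme vstar_def)
  have C1: "((a0/2)/bb) * norm \<alpha> \<le> norm (\<Sum>t\<in>UNIV. \<alpha>$t *\<^sub>R vstar V t)" if "(\<Sum>t\<in>UNIV. \<alpha>$t) = 0" for \<alpha> :: "real^'d option"
  proof -
    have "((\<beta> * (a0/2)) / (\<beta> * bb)) * norm \<alpha> \<le> norm (\<Sum>t\<in>UNIV. \<alpha>$t *\<^sub>R vstar V t)"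
      using C(1)[OF that] by (simp add: vsE)
    then show ?thesis using bpos by simp
  qed
  have C2: "norm (vstar V k) \<le> \<rho>^(card E) * sqrt (real CARD('d option) * bb / (a0/2))" for k
  proof -
    have "norm (vstar V k) \<le> \<rho>^(card E) * sqrt (real CARD('d option) * (\<beta> * bb) / (\<beta> * (a0/2)))"
      using C(2)[of k] by (simp add: vsE)
    then show ?thesis using bpos by (simp add: mult.assoc)
  qed
  show ?thesis using C1 C2 by blast
qed

theorem lemma3:
  fixes n p N :: "nat \<Rightarrow> nat"
    and A :: "nat \<Rightarrow> nat \<Rightarrow> 'd::{finite,linorder} option \<Rightarrow> real"
    and W :: "nat \<Rightarrow> 'd option \<Rightarrow> nat \<Rightarrow> real"
    and Sigma0 :: "real^'d option^'d option"
    and beta :: "nat \<Rightarrow> real"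
    and c1 c2 :: real
  assumes lim_n: "filterlim n at_top sequentially"
    and lim_p: "filterlim p at_top sequentially"
    and lim_N: "filterlim N at_top sequentially"
    and model: "\<And>m. plsi_model (p m) (n m) (A m) (W m)"
    and S0_nonneg: "\<And>k l. 0 \<le> Sigma0 $ k $ l"
    and S0_inv: "invertible Sigma0"
    and S0_irr: "irreducible_mat Sigma0"
    and beta_pos: "\<And>q. 0 < beta q"
    and SA_lim: "(\<lambda>m. (1 / beta (p m)) *\<^sub>R Sigma_A (p m) (A m)) \<longlonglongrightarrow> Sigma0"
    and c1_pos: "0 < c1" and c2_pos: "0 < c2"
    and SW_min: "\<And>m. lambda_min_ge (Sigma_W (n m) (W m)) c1"
    and SW_gap: "\<And>m. eig_gap_ge (mat_sqrt Sigma0 ** Sigma_W (n m) (W m) ** mat_sqrt Sigma0) c2"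
  shows "\<exists>C1 C2. 1 < C1 \<and> 1 < C2 \<and>
    (\<forall>\<^sub>F m in sequentially. \<forall>Xi s V. pop_simplex_data (p m) (n m) (A m) (W m) Xi s V \<longrightarrow>
        (\<forall>k l. k \<noteq> l \<longrightarrow> 1 / C1 \<le> norm (vstar V k - vstar V l) \<and> norm (vstar V k - vstar V l) \<le> C1) \<and>
        1 / C2 \<le> measure lborel (convex hull (range (vstar V))) \<and>
        measure lborel (convex hull (range (vstar V))) \<le> C2)"
proof -
  define Mb where "Mb m = (1 / beta (p m)) *\<^sub>R Sigma_A (p m) (A m)" for m
  have ent: "(\<lambda>m. Mb m $ k $ l) \<longlonglongrightarrow> Sigma0 $ k $ l" for k l
    unfolding Mb_def by (intro tendsto_vec_nth SA_lim)
  have Mbsym: "Mb m $ k $ l = Mb m $ l $ k" for m k l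
    by (simp add: Mb_def Sigma_A_def mult.commute)
  have sym0: "transpose Sigma0 = Sigma0"
  proof -
    have "Sigma0 $ j $ i = Sigma0 $ i $ j" for i j
    proof -
      have "(\<lambda>m. Mb m $ i $ j) \<longlonglongrightarrow> Sigma0 $ j $ i" using ent[of j i] by (simp add: Mbsym)
      then show ?thesis using ent[of i j] by (rule LIMSEQ_unique)
    qed
    then show ?thesis by (simp add: transpose_def vec_eq_iff)
  qed
  have psd0: "0 \<le> qf Sigma0 v" for v
  proof -
    have lim: "(\<lambda>m. qf (Mb m) v) \<longlonglongrightarrow> qf Sigma0 v"
      unfolding qf_expand by (intro tendsto_sum tendsto_mult tendsto_const ent)
    have "0 \<le> qf (Mb m) v" for m
      using beta_pos[of "p m"] by (simp add: Mb_def qf_scaleR qf_SigmaA sum_nonneg)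
    then show ?thesis
      by (intro tendsto_le[OF trivial_limit_sequentially lim tendsto_const]) auto
  qed
  obtain a0 where a0p: "0 < a0" and a0: "\<And>v. a0 * (norm v)^2 \<le> qf Sigma0 v"
    using pd_from_inv[OF sym0 psd0 S0_inv] by blast
  define K where "K = real CARD('d option)"
  have Kp: "0 < K" by (simp add: K_def)
  define \<epsilon> where "\<epsilon> = min 1 (a0 / (2 * K^2))"
  have ep: "0 < \<epsilon>" using a0p Kp by (simp add: \<epsilon>_def)
  have ev1: "\<forall>\<^sub>F m in sequentially. \<forall>k l. \<bar>Mb m $ k $ l - Sigma0 $ k $ l\<bar> \<le> \<epsilon>"
  proof (intro eventually_all_finite)
    fix k l
    have "\<forall>\<^sub>F m in sequentially. dist (Mb m $ k $ l) (Sigma0 $ k $ l) < \<epsilon>"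
      using ent[of k l] ep by (simp add: tendsto_iff)
    then show "\<forall>\<^sub>F m in sequentially. \<bar>Mb m $ k $ l - Sigma0 $ k $ l\<bar> \<le> \<epsilon>"
      by (rule eventually_mono) (simp add: dist_real_def)
  qed
  have ev2: "\<forall>\<^sub>F m in sequentially. \<forall>k l. Sigma0 $ k $ l \<noteq> 0 \<longrightarrow> Sigma0 $ k $ l / 2 \<le> Mb m $ k $ l"
  proof (intro eventually_all_finite)
    fix k l
    show "\<forall>\<^sub>F m in sequentially. Sigma0 $ k $ l \<noteq> 0 \<longrightarrow> Sigma0 $ k $ l / 2 \<le> Mb m $ k $ l"
    proof (cases "Sigma0 $ k $ l = 0")
      case True then show ?thesis by simp
    next
      case False
      then have "Sigma0 $ k $ l / 2 < Sigma0 $ k $ l" using S0_nonneg[of k l] by simp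
      from order_tendstoD(1)[OF ent[of k l] this]
      show ?thesis by (rule eventually_mono) simp
    qed
  qed
  have ev3: "\<forall>\<^sub>F m in sequentially. 1 \<le> n m"
    using lim_n by (simp add: filterlim_at_top)
  define bb where "bb = (\<Sum>k\<in>UNIV. \<Sum>l\<in>UNIV. \<bar>Sigma0$k$l\<bar> + 1)"
  define \<rho> where "\<rho> = 1 + (\<Sum>k\<in>UNIV. \<Sum>l\<in>UNIV. if Sigma0$k$l \<noteq> 0 then 2 * bb / (c1 * Sigma0$k$l) else 0)"
  define E where "E = {(a, b). Sigma0 $ a $ b \<noteq> 0}"
  have bbp: "0 < bb"
  proof -
    have "(\<Sum>k\<in>(UNIV::'d option set). \<Sum>l\<in>(UNIV::'d option set). (0::real)) < bb"
      unfolding bb_def by (rule sum_strict_mono, simp, simp, rule sum_strict_mono) auto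
    then show ?thesis by simp
  qed
  define \<sigma> where "\<sigma> = (a0/2) / bb"
  have sp: "0 < \<sigma>" using a0p bbp by (simp add: \<sigma>_def)
  define Bv where "Bv = \<rho>^(card E) * sqrt (K * bb / (a0/2))"
  define mb where "mb = measure lborel (ball (0::real^'d::{finite,linorder}) (\<sigma> / K^2))"
  have mbp: "0 < mb" unfolding mb_def using content_ball_pos[of "\<sigma> / K^2" "0::real^'d::{finite,linorder}"] sp Kp by simp
  define C1 where "C1 = max 2 (max (1/\<sigma>) (2 * Bv))"
  define C2 where "C2 = max 2 (max (measure lborel (cball (0::real^'d::{finite,linorder}) Bv)) (1 / mb))"
  have irr: "\<And>i j. (i, j) \<in> {(a, b). Sigma0 $ a $ b \<noteq> 0}\<^sup>+"
    using S0_irr by (simp add: irreducible_mat_def)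
  show ?thesis
  proof (intro exI conjI)
    show "1 < C1" by (simp add: C1_def)
    show "1 < C2" by (simp add: C2_def)
    show "\<forall>\<^sub>F m in sequentially. \<forall>Xi s V. pop_simplex_data (p m) (n m) (A m) (W m) Xi s V \<longrightarrow>
        (\<forall>k l. k \<noteq> l \<longrightarrow> 1 / C1 \<le> norm (vstar V k - vstar V l) \<and> norm (vstar V k - vstar V l) \<le> C1) \<and>
        1 / C2 \<le> measure lborel (convex hull (range (vstar V))) \<and>
        measure lborel (convex hull (range (vstar V))) \<le> C2"
      using ev1 ev2 ev3
    proof eventually_elim
      case (elim m)
      show ?case
      proof (intro allI impI)
        fix Xi s V assume data: "pop_simplex_data (p m) (n m) (A m) (W m) Xi s V"
        have PM: "(\<forall>\<alpha>::real^'d option. (\<Sum>t\<in>UNIV. \<alpha>$t) = 0 \<longrightarrow> \<sigma> * norm \<alpha> \<le> norm (\<Sum>t\<in>UNIV. \<alpha>$t *\<^sub>R vstar V t))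
           \<and> (\<forall>k. norm (vstar V k) \<le> Bv)"
          unfolding \<sigma>_def Bv_def K_def
        proof (rule per_m[OF model[of m] data beta_pos[of "p m"] _ SW_min[of m] c1_pos _ _ _ _ a0p a0 S0_nonneg irr bb_def \<rho>_def E_def])
          show "1 \<le> n m" using elim by simp
          show "\<And>k l. \<bar>((1 / beta (p m)) *\<^sub>R Sigma_A (p m) (A m)) $ k $ l - Sigma0 $ k $ l\<bar> \<le> \<epsilon>"
            using elim by (simp add: Mb_def)
          show "\<epsilon> \<le> 1" by (simp add: \<epsilon>_def)
          show "\<epsilon> \<le> a0 / (2 * real CARD('d option)^2)" by (simp add: \<epsilon>_def K_def)
          show "\<And>k l. Sigma0 $ k $ l \<noteq> 0 \<Longrightarrow> Sigma0 $ k $ l / 2 \<le> ((1 / beta (p m)) *\<^sub>R Sigma_A (p m) (A m)) $ k $ l"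
            using elim by (simp add: Mb_def)
        qed
        then have lin: "\<And>\<alpha>::real^'d option. (\<Sum>t\<in>UNIV. \<alpha>$t) = 0 \<Longrightarrow> \<sigma> * norm \<alpha> \<le> norm (\<Sum>t\<in>UNIV. \<alpha>$t *\<^sub>R vstar V t)"
          and bnd: "\<And>k. norm (vstar V k) \<le> Bv" by auto
        have d: "1 / C1 \<le> norm (vstar V k - vstar V l) \<and> norm (vstar V k - vstar V l) \<le> C1" if "k \<noteq> l" for k l
        proof
          have "1 / C1 \<le> 1 / (1/\<sigma>)" unfolding C1_def using sp by (intro divide_left_mono) auto
          also have "\<dots> = \<sigma>" by simp
          also have "\<sigma> \<le> norm (vstar V k - vstar V l)" by (rule geom_dist(1)[OF lin sp bnd that])
          finally show "1 / C1 \<le> norm (vstar V k - vstar V l)" .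
          have "norm (vstar V k - vstar V l) \<le> 2 * Bv" by (rule geom_dist(2)[OF lin sp bnd that])
          also have "\<dots> \<le> C1" by (simp add: C1_def)
          finally show "norm (vstar V k - vstar V l) \<le> C1" .
        qed
        have v1: "measure lborel (convex hull (range (vstar V))) \<le> C2"
          using geom_vol_upper[where vs="vstar V" and B=Bv, OF bnd] by (simp add: C2_def)
        have v2: "1 / C2 \<le> measure lborel (convex hull (range (vstar V)))"
        proof -
          have "1 / C2 \<le> 1 / (1 / mb)" unfolding C2_def using mbp by (intro divide_left_mono) auto
          also have "\<dots> = mb" by simp
          also have "mb \<le> measure lborel (convex hull (range (vstar V)))"
            unfolding mb_def K_def by (rule geom_vol_lower[OF lin sp])
          finally show ?thesis .
        qed
        show "(\<forall>k l. k \<noteq> l \<longrightarrow> 1 / C1 \<le> norm (vstar V k - vstar V l) \<and> norm (vstar V k - vstar V l) \<le> C1) \<and>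
          1 / C2 \<le> measure lborel (convex hull (range (vstar V))) \<and>
          measure lborel (convex hull (range (vstar V))) \<le> C2"
          using d v1 v2 by blast
      qed
    qed
  qed
qed

end
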